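(* Assume that for some $\gamma>0$ the sequence $\left(j\lambda_j\log^{1+\gamma}(j\vee2)\right)_{j\ge1}$ is decreasing. Then there exists a constant $C(\gamma)$ depending only on $\gamma$ such that for every integer $k\ge1$, $$\sum_{j\ge1,\,j\ne k}\frac{\lambda_j}{|\lambda_k-\lambda_j|}\le C(\gamma)\,k\left[\log k\vee1\right].$$
   Context: $(\lambda_j)_{j\ge1}$ is the non-increasing sequence of (nonnegative) eigenvalues of the covariance operator $\Gamma h=\mathbb E[\langle h,X\rangle X]$ of a centered square-integrable random element $X$ of a separable Hilbert space. *)

theory Defs
  imports Complex_Main
begin

end

theory Submission
  imports Defs "HOL-Analysis.Harmonic_Numbers"
begin

lemma mvt_f:
  fixes g x :: real
  assumes g: "g > 0" and x: "x \<ge> 3"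
  shows "g / (x * ln x powr (1 + g)) \<le> ln (x - 1) powr (- g) - ln x powr (- g)"
proof -
  have "\<exists>z. x - 1 < z \<and> z < x \<and> ln x powr (- g) - ln (x - 1) powr (- g) = (x - (x - 1)) * ((- g) * ln z powr (- g - 1) / z)"
  proof (rule MVT2)
    show "x - 1 < x" by simp
    fix y assume y: "x - 1 \<le> y" "y \<le> x"
    have "ln y > 0" using y x by simp
    then show "((\<lambda>y. ln y powr (- g)) has_real_derivative (- g) * ln y powr (- g - 1) / y) (at y)"
      using y x by (auto intro!: derivative_eq_intros simp: field_simps)
  qed
  then obtain z where z: "x - 1 < z" "z < x" "ln x powr (- g) - ln (x - 1) powr (- g) = (- g) * ln z powr (- g - 1) / z" by auto
  have lz: "ln z > 0" using z x by simp
  have lzx: "ln z \<le> ln x" using z x by (intro ln_mono) auto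
  have "ln z powr (1 + g) \<le> ln x powr (1 + g)" using lz lzx g by (intro powr_mono2) auto
  moreover have "ln z powr (1+g) > 0" using lz by simp
  moreover have "z \<le> x" using z by simp
  moreover have "z > 0" using z x by simp
  ultimately have "z * ln z powr (1 + g) \<le> x * ln x powr (1 + g)" by (intro mult_mono) auto
  then have "g / (x * ln x powr (1 + g)) \<le> g / (z * ln z powr (1 + g))"
    using g x \<open>z>0\<close> \<open>ln z powr (1+g) > 0\<close> by (intro divide_left_mono mult_pos_pos) auto
  also have "\<dots> = g * ln z powr (- g - 1) / z"
  proof -
    have "ln z powr (- g - 1) * ln z powr (1 + g) = 1"
      using lz by (simp add: powr_add[symmetric])
    then show ?thesis using lz \<open>z > 0\<close> by (simp add: divide_simps)
  qed
  finally show ?thesis using z by simp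
qed


lemma lam_dec:
  fixes lam :: "nat \<Rightarrow> real"
  assumes mono: "\<forall>j\<ge>1. lam (Suc j) \<le> lam j" and "1 \<le> i" "i \<le> j"
  shows "lam j \<le> lam i"
  using assms(3) 
proof (induction j rule: dec_induct)
  case base then show ?case by simp
next
  case (step n) then show ?case using mono assms(2) by (meson order_trans le_trans)
qed

lemma pt:
  fixes lam :: "nat \<Rightarrow> real" and g :: real
  assumes g: "g > 0"
    and nn: "\<forall>j\<ge>1. 0 \<le> lam j" and mono: "\<forall>j\<ge>1. lam (Suc j) \<le> lam j"
    and W: "\<forall>i j. 1 \<le> i \<longrightarrow> i \<le> j \<longrightarrow>
             real j * lam j * ln (real (max j 2)) powr (1 + g)
               \<le> real i * lam i * ln (real (max i 2)) powr (1 + g)"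
    and k: "k \<ge> 1" and j: "j \<ge> 1" "j \<noteq> k"
  shows "lam j / \<bar>lam k - lam j\<bar> \<le> (if j \<le> 2*k then 2*real k/\<bar>real j - real k\<bar>
     else 2 * real k * ln (real (max k 2)) powr (1 + g) / g * (ln (real j - 1) powr (- g) - ln (real j) powr (- g)))"
proof -
  define L where "L i = ln (real (max i 2)) powr (1 + g)" for i :: nat
  have Lpos: "L i > 0" for i
  proof -
    have "ln (real (max i 2)) > 0" by simp
    then show ?thesis unfolding L_def by simp
  qed
  have Lmono: "L i \<le> L i'" if "i \<le> i'" for i i'
    unfolding L_def using that g by (intro powr_mono2 ln_mono) auto
  have W': "real j' * lam j' * L j' \<le> real i * lam i * L i" if "1 \<le> i" "i \<le> j'" for i j'
    using W that unfolding L_def by blast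
  have lj: "lam j \<ge> 0" "lam k \<ge> 0" using nn j k by auto
  show ?thesis
  proof (cases "j < k")
    case True
    have "real k * lam k * L k \<le> real j * lam j * L j" using W' j True by simp
    also have "\<dots> \<le> real j * lam j * L k" using Lmono[of j k] True lj
      by (intro mult_left_mono) auto
    finally have 1: "real k * lam k \<le> real j * lam j" using Lpos[of k] by simp
    have 2: "lam k \<le> lam j" using lam_dec[OF mono j(1)] True by simp
    have 3: "lam j * (real k - real j) \<le> 2 * real k * (lam j - lam k)"
    proof -
      have "real k * lam k \<le> real k * lam j" using 2 by (intro mult_left_mono) auto
      then show ?thesis using 1 by (simp add: algebra_simps)
    qed
    show ?thesis
    proof (cases "lam j = lam k")
      case True then show ?thesis using \<open>j<k\<close> by simp
    next
      case False
      then have "lam j - lam k > 0" using 2 by simp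
      then show ?thesis using True 3 by (simp add: divide_simps abs_if)
    qed
  next
    case False
    then have jk: "k < j" using j by simp
    have "real j * lam j * L j \<le> real k * lam k * L k" using W' k jk by simp
    also have "\<dots> \<le> real k * lam k * L j" using Lmono[of k j] jk lj
      by (intro mult_left_mono) auto
    finally have 1: "real j * lam j \<le> real k * lam k" using Lpos[of j] by simp
    have 2: "lam j \<le> lam k" using lam_dec[OF mono k] jk by simp
    show ?thesis
    proof (cases "lam k = 0")
      case True
      then have "lam j = 0" using 2 lj by simp
      moreover have "ln (real j - 1) powr (- g) - ln (real j) powr (- g) \<ge> 0" if "\<not> j \<le> 2 * k"
      proof -
        have "real j \<ge> 3" using that k by simp
        then have "g / (real j * ln (real j) powr (1 + g)) \<le> ln (real j - 1) powr (- g) - ln (real j) powr (- g)"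
          using mvt_f[OF g] by blast
        moreover have "g / (real j * ln (real j) powr (1 + g)) \<ge> 0" using g by simp
        ultimately show ?thesis by linarith
      qed
      ultimately show ?thesis using g by (auto intro!: mult_nonneg_nonneg)
    next
      case False
      then have lk: "lam k > 0" using lj by simp
      show ?thesis
      proof (cases "j \<le> 2 * k")
        case True
        have 3: "lam j * (real j - real k) \<le> 2 * real k * (lam k - lam j)"
        proof -
          have "real k * lam j \<le> real k * lam k" using 2 by (intro mult_left_mono) auto
          then show ?thesis using 1 by (simp add: algebra_simps)
        qed
        have "lam k - lam j > 0"
        proof -
          have "real k * lam k < real j * lam k" using lk jk by (intro mult_strict_right_mono) auto
          then have "real j * lam j < real j * lam k" using 1 by linarith
          then show ?thesis using jk by (simp add: mult_less_cancel_left_pos)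
        qed
        then show ?thesis using True 3 jk by (simp add: divide_simps abs_if)
      next
        case False
        have j3: "real j \<ge> 3" using False k by simp
        have Lj: "L j = ln (real j) powr (1 + g)" unfolding L_def using False k by (simp add: max_def)
        have m: "g / (real j * L j) \<le> ln (real j - 1) powr (- g) - ln (real j) powr (- g)"
          using mvt_f[OF g j3] Lj by simp
        have hj: "lam j * 2 \<le> lam k"
        proof -
          have "real j * lam j \<ge> real (2*k) * lam j" using False lj by (intro mult_right_mono) auto
          then have "real (2*k) * lam j \<le> real k * lam k" using 1 by linarith
          then show ?thesis using k by simp
        qed
        have "lam j / \<bar>lam k - lam j\<bar> \<le> 2 * lam j / lam k"
        proof -
          have "lam j * (lam j * 2) \<le> lam j * lam k" using hj lj by (intro mult_left_mono) auto
          then show ?thesis using hj lk lj by (simp add: divide_simps abs_if algebra_simps)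
        qed
        also have "\<dots> \<le> 2 * real k * L k / (real j * L j)"
        proof -
          have "real j * lam j * L j \<le> real k * lam k * L k" using W' k jk by simp
          then show ?thesis using lk Lpos[of j] Lpos[of k] j by (simp add: divide_simps mult.commute mult.left_commute)
        qed
        also have "\<dots> = 2 * real k * L k / g * (g / (real j * L j))" using g by simp
        also have "\<dots> \<le> 2 * real k * L k / g * (ln (real j - 1) powr (- g) - ln (real j) powr (- g))"
          using m Lpos[of k] g by (intro mult_left_mono) auto
        finally show ?thesis using False unfolding L_def by simp
      qed
    qed
  qed
qed


lemma hsum:
  fixes k :: nat
  assumes k: "k \<ge> 1"
  shows "(\<Sum>j\<le>2*k. if 1 \<le> j \<and> j \<le> 2*k \<and> j \<noteq> k then 2*real k/\<bar>real j - real k\<bar> else 0)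
     \<le> 4 * real k * harm k"
proof -
  define A where "A j = (if 1 \<le> j \<and> j \<le> 2*k \<and> j \<noteq> k then 2*real k/\<bar>real j - real k\<bar> else 0)" for j :: nat
  have split: "{..2*k} = {..<k} \<union> {k..2*k}" by auto
  have "sum A {..2*k} = sum A {..<k} + sum A {k..2*k}"
    unfolding split by (rule sum.union_disjoint) auto
  also have "sum A {..<k} \<le> 2 * real k * harm k"
  proof -
    have "sum A {..<k} = (\<Sum>i<k. A (k - Suc i))" by (rule sum.nat_diff_reindex[symmetric])
    also have "\<dots> \<le> (\<Sum>i<k. 2 * real k * inverse (of_nat (Suc i)))"
    proof (rule sum_mono)
      fix i assume i: "i \<in> {..<k}"
      show "A (k - Suc i) \<le> 2 * real k * inverse (of_nat (Suc i))"
      proof (cases "1 \<le> k - Suc i")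
        case True
        then have "\<bar>real (k - Suc i) - real k\<bar> = real (Suc i)" using i by (simp add: of_nat_diff)
        moreover have "k - Suc i \<noteq> k" "k - Suc i \<le> 2*k" using i by auto
        ultimately have "A (k - Suc i) = 2 * real k / real (Suc i)" using True unfolding A_def by simp
        then show ?thesis by (simp add: divide_inverse)
      next
        case False then show ?thesis unfolding A_def by simp
      qed
    qed
    also have "\<dots> = 2 * real k * harm k" by (simp add: harm_altdef sum_distrib_left)
    finally show ?thesis .
  qed
  also have "sum A {k..2*k} \<le> 2 * real k * harm k"
  proof -
    have "sum A {k..2*k} = sum A {0+k..k+k}" by (simp add: mult_2)
    also have "\<dots> = (\<Sum>i\<in>{0..k}. A (i + k))" by (rule sum.shift_bounds_cl_nat_ivl)
    also have "\<dots> = (\<Sum>i\<le>k. A (i + k))" by (simp add: atLeast0AtMost)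
    also have "\<dots> = A k + (\<Sum>i<k. A (Suc i + k))" using sum.atMost_shift[of "\<lambda>i. A (i + k)" k] by simp
    also have "\<dots> = (\<Sum>i<k. 2 * real k * inverse (of_nat (Suc i)))"
    proof -
      have "A k = 0" unfolding A_def by simp
      moreover have "A (Suc i + k) = 2 * real k * inverse (of_nat (Suc i))" if "i < k" for i
        using that unfolding A_def by (simp add: field_simps)
      ultimately show ?thesis by simp
    qed
    also have "\<dots> = 2 * real k * harm k" by (simp add: harm_altdef sum_distrib_left)
    finally show ?thesis by simp
  qed
  finally show ?thesis unfolding A_def by (simp add: mult_ac)
qed


lemma main:
  fixes lam :: "nat \<Rightarrow> real" and g :: real
  assumes g: "g > 0"
    and nn: "\<forall>j\<ge>1. 0 \<le> lam j" and mono: "\<forall>j\<ge>1. lam (Suc j) \<le> lam j"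
    and W: "\<forall>i j. 1 \<le> i \<longrightarrow> i \<le> j \<longrightarrow>
             real j * lam j * ln (real (max j 2)) powr (1 + g)
               \<le> real i * lam i * ln (real (max i 2)) powr (1 + g)"
    and k: "k \<ge> 1"
  shows "summable (\<lambda>j. if j \<ge> 1 \<and> j \<noteq> k then lam j / \<bar>lam k - lam j\<bar> else 0)
           \<and> (\<Sum>j. if j \<ge> 1 \<and> j \<noteq> k then lam j / \<bar>lam k - lam j\<bar> else 0)
               \<le> (8 + 2 / g) * real k * max (ln (real k)) 1"
proof -
  define F where "F j = (if j \<ge> 1 \<and> j \<noteq> k then lam j / \<bar>lam k - lam j\<bar> else 0)" for j
  define f where "f x = ln x powr (- g)" for x :: real
  define G where "G n = f (real (max n (2*k)))" for n :: nat
  define c where "c = 2 * real k * ln (real (max k 2)) powr (1 + g) / g"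
  define A where "A j = (if 1 \<le> j \<and> j \<le> 2*k \<and> j \<noteq> k then 2*real k/\<bar>real j - real k\<bar> else 0)" for j :: nat
  define B where "B j = (if j = 0 then 0 else c * (G (j - 1) - G j))" for j :: nat
  have cpos: "c \<ge> 0" unfolding c_def using g by simp
  have fdec: "f (real j - 1) - f (real j) \<ge> 0" if "j > 2*k" for j :: nat
  proof -
    have j3: "real j \<ge> 3" using that k by simp
    have "g / (real j * ln (real j) powr (1 + g)) \<ge> 0" using g by simp
    then show ?thesis using mvt_f[OF g j3] unfolding f_def by linarith
  qed
  have GS: "G (j - 1) = f (real j - 1) \<and> G j = f (real j)" if "j > 2*k" for j
  proof -
    have "max (j - 1) (2*k) = j - 1" "max j (2*k) = j" using that by auto
    moreover have "real (j - 1) = real j - 1" using that by (simp add: of_nat_diff)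
    ultimately show ?thesis unfolding G_def by simp
  qed
  have Bnn: "B j \<ge> 0" for j
  proof (cases "j > 2*k")
    case True
    then have "G (j - 1) = f (real j - 1)" "G j = f (real j)" using GS by auto
    then show ?thesis using True fdec[OF True] cpos unfolding B_def by simp
  next
    case False
    then have "j = 0 \<or> G (j - 1) = G j" unfolding G_def by (auto simp: max_def)
    then show ?thesis unfolding B_def by auto
  qed
  have Ann: "A j \<ge> 0" for j unfolding A_def by simp
  have Fnn: "F j \<ge> 0" for j unfolding F_def using nn by auto
  have FB: "F j \<le> A j + B j" for j
  proof (cases "j \<ge> 1 \<and> j \<noteq> k")
    case False then show ?thesis using Ann Bnn unfolding F_def by (auto intro: add_nonneg_nonneg)
  next
    case True
    have p: "F j \<le> (if j \<le> 2*k then 2*real k/\<bar>real j - real k\<bar>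
       else c * (f (real j - 1) - f (real j)))"
      using pt[OF g nn mono W k, of j] True unfolding F_def c_def f_def by simp
    show ?thesis
    proof (cases "j \<le> 2*k")
      case True2: True
      then show ?thesis using p True Bnn[of j] unfolding A_def by simp
    next
      case False
      then have "G (j - 1) = f (real j - 1)" "G j = f (real j)" using GS by auto
      then show ?thesis using p False True unfolding A_def B_def by simp
    qed
  qed
  have Asums: "A sums (\<Sum>j\<le>2*k. A j)"
    by (rule sums_finite) (auto simp: A_def)
  have Glim: "G \<longlonglongrightarrow> 0"
  proof -
    have "(\<lambda>n. f (real n)) \<longlonglongrightarrow> 0" unfolding f_def
      using g by (intro tendsto_neg_powr filterlim_compose[OF ln_at_top filterlim_real_sequentially]) auto
    moreover have "eventually (\<lambda>n. f (real n) = G n) sequentially"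
      unfolding G_def eventually_sequentially by (intro exI[of _ "2*k"]) (auto simp: max_def)
    ultimately show ?thesis using tendsto_cong[of "\<lambda>n. f (real n)" G sequentially 0] by blast
  qed
  have "(\<lambda>n. c * (G n - G (Suc n))) sums (c * (G 0 - 0))"
    by (intro sums_mult telescope_sums' Glim)
  then have "(\<lambda>n. B (Suc n)) sums (c * f (real (2*k)))" unfolding B_def G_def by simp
  then have Bsums: "B sums (c * f (real (2*k)))" using sums_Suc_iff[of B] unfolding B_def by simp
  have ABsums: "(\<lambda>j. A j + B j) sums ((\<Sum>j\<le>2*k. A j) + c * f (real (2*k)))"
    by (rule sums_add[OF Asums Bsums])
  have sumF: "summable F"
    by (rule summable_comparison_test[of _ "\<lambda>j. A j + B j"]) (use Fnn FB ABsums in \<open>auto simp: sums_iff\<close>)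
  have "suminf F \<le> suminf (\<lambda>j. A j + B j)"
    by (rule suminf_le) (use FB sumF ABsums in \<open>auto simp: sums_iff\<close>)
  also have "\<dots> = (\<Sum>j\<le>2*k. A j) + c * f (real (2*k))" using ABsums by (simp add: sums_iff)
  also have "\<dots> \<le> (8 + 2 / g) * real k * max (ln (real k)) 1"
  proof -
    define M where "M = max (ln (real k)) 1"
    have h1: "(\<Sum>j\<le>2*k. A j) \<le> 4 * real k * harm k" using hsum[OF k] unfolding A_def .
    have "harm k - ln (real k) \<le> harm 1 - ln (real 1)"
      using euler_mascheroni_sequence_decreasing[of 1 k] k by simp
    then have "harm k \<le> 1 + ln (real k)" by (simp add: harm_altdef)
    also have "\<dots> \<le> 2 * M" unfolding M_def by simp
    finally have "4 * real k * harm k \<le> 4 * real k * (2 * M)" by (intro mult_left_mono) auto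
    then have "(\<Sum>j\<le>2*k. A j) \<le> 8 * real k * M" using h1 by (simp add: algebra_simps)
    moreover have "c * f (real (2*k)) \<le> 2 / g * real k * M"
    proof -
      define m where "m = ln (real (max k 2))"
      have mpos: "m > 0" unfolding m_def by simp
      have mM: "m \<le> M" unfolding m_def M_def using ln_2_less_1 by (auto simp: max_def)
      have m2: "m \<le> ln (real (2*k))" unfolding m_def using k by (intro ln_mono) auto
      have "m powr g \<le> ln (real (2*k)) powr g" using m2 mpos g by (intro powr_mono2) auto
      moreover have "ln (real (2*k)) powr (- g) = 1 / ln (real (2*k)) powr g"
        by (simp add: powr_minus_divide)
      moreover have "ln (real (2*k)) > 0" using k by simp
      ultimately have q0: "m powr g * ln (real (2*k)) powr (- g) \<le> ln (real (2*k)) powr g * ln (real (2*k)) powr (- g)"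
        by (intro mult_right_mono) auto
      have "ln (real (2*k)) powr g * ln (real (2*k)) powr (- g) = 1"
        using \<open>ln (real (2*k)) > 0\<close> by (simp add: powr_add[symmetric])
      then have q: "m powr g * ln (real (2*k)) powr (- g) \<le> 1" using q0 by simp
      have "c * f (real (2*k)) = 2 * real k / g * m * (m powr g * ln (real (2*k)) powr (- g))"
        unfolding c_def f_def m_def using mpos by (simp add: powr_add m_def)
      also have "\<dots> \<le> 2 * real k / g * m * 1"
        using q mpos g by (intro mult_left_mono) auto
      also have "\<dots> \<le> 2 * real k / g * M" using mM g by (simp add: mult_left_mono divide_right_mono)
      finally show ?thesis by simp
    qed
    ultimately show ?thesis unfolding M_def by (simp add: algebra_simps)
  qed
  finally show ?thesis using sumF unfolding F_def by simp
qed

theorem lemma10p1: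
  fixes \<gamma> :: real
  assumes "\<gamma> > 0"
  shows "\<exists>C::real. \<forall>lam::nat \<Rightarrow> real.
     ((\<forall>j\<ge>1. 0 \<le> lam j) \<and> (\<forall>j\<ge>1. lam (Suc j) \<le> lam j)
      \<and> summable (\<lambda>j. if j \<ge> 1 then lam j else 0)
      \<and> (\<forall>i j. 1 \<le> i \<longrightarrow> i \<le> j \<longrightarrow>
             real j * lam j * ln (real (max j 2)) powr (1 + \<gamma>)
               \<le> real i * lam i * ln (real (max i 2)) powr (1 + \<gamma>)))
     \<longrightarrow> (\<forall>k\<ge>1.
           summable (\<lambda>j. if j \<ge> 1 \<and> j \<noteq> k then lam j / \<bar>lam k - lam j\<bar> else 0)
           \<and> (\<Sum>j. if j \<ge> 1 \<and> j \<noteq> k then lam j / \<bar>lam k - lam j\<bar> else 0)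
               \<le> C * real k * max (ln (real k)) 1)"
    using main[OF assms] by blast

end
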